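(* Let $G$ be the $m\times n$ grid with $m,n\ge 2$. For all $1\le z<z'<z''\le n$, the set $\{(1,z),(m,z'),(1,z'')\}$ is a landmark set of $G$.
   Context: The $m\times n$ grid $G$ has vertex set $V=\{(i,j):1\le i\le m,\ 1\le j\le n\}$, with $(i_1,j_1),(i_2,j_2)$ adjacent iff $|i_1-i_2|+|j_1-j_2|=1$; thus $d((i_1,j_1),(i_2,j_2))=|i_1-i_2|+|j_1-j_2|$. A vertex $x$ separates $u,v$ if $d(x,u)\neq d(x,v)$. A landmark set is $L\subseteq V$ such that every pair of distinct vertices is separated by some vertex of $L$. *)

theory Defs
  imports Main
begin

definition grid_vertices :: "nat \<Rightarrow> nat \<Rightarrow> (nat \<times> nat) set" where
  "grid_vertices m n = {(i, j). 1 \<le> i \<and> i \<le> m \<and> 1 \<le> j \<and> j \<le> n}"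

definition grid_dist :: "nat \<times> nat \<Rightarrow> nat \<times> nat \<Rightarrow> int" where
  "grid_dist u v = \<bar>int (fst u) - int (fst v)\<bar> + \<bar>int (snd u) - int (snd v)\<bar>"

definition separates :: "nat \<times> nat \<Rightarrow> nat \<times> nat \<Rightarrow> nat \<times> nat \<Rightarrow> bool" where
  "separates x u v \<longleftrightarrow> grid_dist x u \<noteq> grid_dist x v"

definition is_landmark_set :: "nat \<Rightarrow> nat \<Rightarrow> (nat \<times> nat) set \<Rightarrow> bool" where
  "is_landmark_set m n L \<longleftrightarrow> L \<subseteq> grid_vertices m n \<and>
     (\<forall>u\<in>grid_vertices m n. \<forall>v\<in>grid_vertices m n. u \<noteq> v \<longrightarrow> (\<exists>x\<in>L. separates x u v))"

end

theory Submission
  imports Defs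
begin

lemma key:
  fixes i j k l m z z' z'' n :: int
  assumes "1 \<le> i" "i \<le> m" "1 \<le> k" "k \<le> m" "1 \<le> j" "1 \<le> l" "1\<le>z" "z<z'" "z'<z''" "j \<le> n" "l \<le> n" "z'' \<le> n"
  and "\<bar>1 - i\<bar> + \<bar>z - j\<bar> = \<bar>1 - k\<bar> + \<bar>z - l\<bar>"
  and "\<bar>m - i\<bar> + \<bar>z' - j\<bar> = \<bar>m - k\<bar> + \<bar>z' - l\<bar>"
  and "\<bar>1 - i\<bar> + \<bar>z'' - j\<bar> = \<bar>1 - k\<bar> + \<bar>z'' - l\<bar>"
  shows "i = k \<and> j = l"
  using assms by (simp add: abs_if split: if_splits)

theorem mainTheorem13:
  fixes m n z z' z'' :: nat
  assumes "m \<ge> 2" and "n \<ge> 2"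
    and "1 \<le> z" and "z < z'" and "z' < z''" and "z'' \<le> n"
  shows "is_landmark_set m n {(1, z), (m, z'), (1, z'')}"
  unfolding is_landmark_set_def
proof (intro conjI ballI impI)
  show "{(1, z), (m, z'), (1, z'')} \<subseteq> grid_vertices m n"
    using assms by (auto simp: grid_vertices_def)
next
  fix u v assume u: "u \<in> grid_vertices m n" and v: "v \<in> grid_vertices m n" and ne: "u \<noteq> v"
  obtain i j where uu: "u = (i,j)" by force
  obtain k l where vv: "v = (k,l)" by force
  show "\<exists>x\<in>{(1, z), (m, z'), (1, z'')}. separates x u v"
  proof (rule ccontr)
    assume "\<not> ?thesis"
    hence e: "grid_dist (1,z) u = grid_dist (1,z) v" "grid_dist (m,z') u = grid_dist (m,z') v"
      "grid_dist (1,z'') u = grid_dist (1,z'') v" by (auto simp: separates_def)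
    have "int i = int k \<and> int j = int l"
      apply (rule key[where m="int m" and z="int z" and z'="int z'" and z''="int z''" and n="int n"])
      using u v e assms by (auto simp: grid_vertices_def grid_dist_def uu vv)
    thus False using ne uu vv by simp
  qed
qed

end
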